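(* A query $Q$ is hierarchical if and only if its multivariate extension $\widehat Q$ is acyclic (i.e., every component $\widehat Q_\sigma$ of $\widehat Q$ is $\alpha$-acyclic).
   Context: A query is a full conjunctive query $Q = R_1(\mathbf X_1)\wedge\cdots\wedge R_k(\mathbf X_k)$. For a variable $X$, $\mathrm{at}(X)$ is the set of atoms whose schema contains $X$. $Q$ is hierarchical if for any two variables $X,Y$, either $\mathrm{at}(X)\subseteq\mathrm{at}(Y)$, or $\mathrm{at}(Y)\subseteq\mathrm{at}(X)$, or $\mathrm{at}(X)\cap\mathrm{at}(Y)=\emptyset$. A query is ($\alpha$-)acyclic if it has a join tree: a tree whose nodes are its atoms such that, for every variable, the atoms containing it form a connected subtree. Multivariate extension: take fresh variables $Z_1,\dots,Z_k$. For a permutation $\sigma$ of $[k]$, the component $\widehat Q_\sigma$ replaces each atom $R_{\sigma_i}(\mathbf X_{\sigma_i})$ by $\widehat R_{\sigma_i}(Z_1,\dots,Z_i,\mathbf X_{\sigma_i})$; $\widehat Q$ is the union of all $k!$ components, and it is called acyclic when each component is. *)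

theory Defs
  imports "HOL-Combinatorics.Permutations"
begin

text \<open>A query with k atoms is a list of k schemas (sets of variables); atom i is
  identified with its index i < k. Relation names play no role for
  hierarchicality or acyclicity, and distinct indices are distinct atoms.\<close>

type_synonym 'v query = "'v set list"

definition atoms_of :: "'v query \<Rightarrow> 'v \<Rightarrow> nat set" where
  "atoms_of Q X = {i. i < length Q \<and> X \<in> Q ! i}"

definition hierarchical :: "'v query \<Rightarrow> bool" where
  "hierarchical Q \<longleftrightarrow> (\<forall>X Y. atoms_of Q X \<subseteq> atoms_of Q Y \<or> atoms_of Q Y \<subseteq> atoms_of Q X
                          \<or> atoms_of Q X \<inter> atoms_of Q Y = {})"

inductive reach_in :: "nat set set \<Rightarrow> nat set \<Rightarrow> nat \<Rightarrow> nat \<Rightarrow> bool"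
  for E :: "nat set set" and S :: "nat set" where
  refl: "u \<in> S \<Longrightarrow> reach_in E S u u"
| step: "reach_in E S u v \<Longrightarrow> {v, w} \<in> E \<Longrightarrow> w \<in> S \<Longrightarrow> reach_in E S u w"

definition connected_in :: "nat set set \<Rightarrow> nat set \<Rightarrow> bool" where
  "connected_in E S \<longleftrightarrow> (\<forall>u\<in>S. \<forall>v\<in>S. reach_in E S u v)"

text \<open>A tree on vertex set V: a connected graph with no cycle, i.e. every edge is a bridge.\<close>

definition is_tree :: "nat set \<Rightarrow> nat set set \<Rightarrow> bool" where
  "is_tree V E \<longleftrightarrow>
     E \<subseteq> {{u, v} | u v. u \<in> V \<and> v \<in> V \<and> u \<noteq> v}
   \<and> connected_in E V
   \<and> (\<forall>u v. {u, v} \<in> E \<longrightarrow> \<not> reach_in (E - {{u, v}}) V u v)"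

definition join_tree :: "'v query \<Rightarrow> nat set set \<Rightarrow> bool" where
  "join_tree Q E \<longleftrightarrow> is_tree {..<length Q} E \<and> (\<forall>X. connected_in E (atoms_of Q X))"

definition alpha_acyclic :: "'v query \<Rightarrow> bool" where
  "alpha_acyclic Q \<longleftrightarrow> (\<exists>E. join_tree Q E)"

text \<open>Fresh variables Z_1,...,Z_k are Inr 0,...,Inr (k-1);
  original variables are Inl X. For a permutation \<sigma> of {0..<k}, the atom at
  (0-based) position i is R_{\<sigma> i} extended with Z_1..Z_{i+1}.\<close>

definition mv_component :: "'v query \<Rightarrow> (nat \<Rightarrow> nat) \<Rightarrow> ('v + nat) query" where
  "mv_component Q \<sigma> = map (\<lambda>i. Inr ` {..i} \<union> Inl ` (Q ! (\<sigma> i))) [0..<length Q]"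

definition mv_extension_acyclic :: "'v query \<Rightarrow> bool" where
  "mv_extension_acyclic Q \<longleftrightarrow>
     (\<forall>\<sigma>. \<sigma> permutes {..<length Q} \<longrightarrow> alpha_acyclic (mv_component Q \<sigma>))"

end

theory Submission
  imports Defs
begin

lemma reach_in_mem: "reach_in E S u v \<Longrightarrow> u \<in> S \<and> v \<in> S"
  by (induction rule: reach_in.induct) auto

lemma reach_in_trans: "reach_in E S v w \<Longrightarrow> reach_in E S u v \<Longrightarrow> reach_in E S u w"
  by (induction rule: reach_in.induct) (auto intro: reach_in.step)

lemma reach_in_edge: "{u,w} \<in> E \<Longrightarrow> u \<in> S \<Longrightarrow> w \<in> S \<Longrightarrow> reach_in E S u w"
  by (meson reach_in.refl reach_in.step)

lemma reach_in_sym: "reach_in E S u v \<Longrightarrow> reach_in E S v u"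
proof (induction rule: reach_in.induct)
  case (refl u) then show ?case by (rule reach_in.refl)
next
  case (step u v w)
  have "v \<in> S" using reach_in_mem[OF step.hyps(1)] by simp
  have "reach_in E S w v" using reach_in_edge[of w v E S] step.hyps(2,3) \<open>v\<in>S\<close>
    by (simp add: insert_commute)
  then show ?case using reach_in_trans[OF step.IH] by blast
qed

lemma reach_in_first: "reach_in E S u v \<Longrightarrow> u = v \<or> (\<exists>w\<in>S. w \<noteq> u \<and> {u,w} \<in> E)"
  by (induction rule: reach_in.induct) auto

lemma reach_in_lift:
  "reach_in E S u v \<Longrightarrow> (\<And>e. e \<in> E \<Longrightarrow> e \<subseteq> S \<Longrightarrow> e \<in> E') \<Longrightarrow> S \<subseteq> S' \<Longrightarrow> reach_in E' S' u v"
proof (induction rule: reach_in.induct)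
  case (refl u) thus ?case by (auto intro: reach_in.refl)
next
  case (step u v w)
  have "v \<in> S" using reach_in_mem[OF step.hyps(1)] by simp
  hence "{v,w} \<in> E'" using step by auto
  thus ?case using step by (auto intro: reach_in.step)
qed

lemma conn_lemma:
  assumes fin: "finite P"
    and h: "\<And>i. i \<in> P \<Longrightarrow> i < Max P \<Longrightarrow> q i \<in> P \<and> i < q i \<and> {i, q i} \<in> E"
  shows "connected_in E P"
proof (cases "P = {}")
  case True thus ?thesis by (simp add: connected_in_def)
next
  case False
  let ?m = "Max P"
  have mP: "?m \<in> P" using fin False by simp
  have key: "\<forall>i. ?m - i = n \<longrightarrow> i \<in> P \<longrightarrow> reach_in E P ?m i" for n
  proof (induction n rule: less_induct)
    case (less n)
    show ?case
    proof (intro allI impI)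
      fix i assume n: "?m - i = n" and iP: "i \<in> P"
      have le: "i \<le> ?m" using fin iP by simp
      show "reach_in E P ?m i"
      proof (cases "i = ?m")
        case True thus ?thesis using mP by (simp add: reach_in.refl)
      next
        case False
        hence lt: "i < ?m" using le by simp
        from h[OF iP lt] have q: "q i \<in> P" "i < q i" "{i, q i} \<in> E" by auto
        have "q i \<le> ?m" using fin q(1) by simp
        hence "?m - q i < n" using n q(2) lt by simp
        hence "reach_in E P ?m (q i)" using less.IH q(1) by blast
        moreover have "{q i, i} \<in> E" using q(3) by (simp add: insert_commute)
        ultimately show ?thesis using iP by (rule reach_in.step)
      qed
    qed
  qed
  show ?thesis unfolding connected_in_def
  proof (intro ballI)
    fix u v assume "u \<in> P" "v \<in> P"
    hence "reach_in E P ?m u" "reach_in E P ?m v" using key by blast+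
    thus "reach_in E P u v" using reach_in_sym reach_in_trans by blast
  qed
qed

lemma funpow_ge: "(\<And>x. x \<le> q x) \<Longrightarrow> (x::nat) \<le> (q ^^ n) x"
proof (induction n)
  case 0 thus ?case by simp
next
  case (Suc n)
  have "(q ^^ n) x \<le> q ((q ^^ n) x)" by (rule Suc.prems)
  thus ?case using Suc by (simp del: funpow.simps add: funpow.simps(2)) (meson order_trans)
qed

lemma bridge:
  fixes q :: "nat \<Rightarrow> nat"
  assumes qge: "\<And>x. x \<le> q x" and qgt: "\<And>i. i < K \<Longrightarrow> i < q i"
    and jK: "j < K"
    and E_def: "E = {{i, q i} | i. i < K}"
  shows "\<not> reach_in (E - {{j, q j}}) V j (q j)"
proof
  define D where "D = {x. \<exists>n. (q ^^ n) x = j}"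
  have inv: "reach_in (E - {{j, q j}}) V u w \<Longrightarrow> u \<in> D \<Longrightarrow> w \<in> D" for u w
  proof (induction rule: reach_in.induct)
    case (refl u) thus ?case by blast
  next
    case (step u v w)
    have vD: "v \<in> D" using step by blast
    have vwE: "{v,w} \<in> E" and vwn: "{v,w} \<noteq> {j, q j}" using step.hyps(2) by auto
    from vwE obtain i where i01: "i < K" "{v,w} = {i, q i}" unfolding E_def by blast
    with vwn have i: "i < K" "{v,w} = {i, q i}" "{i, q i} \<noteq> {j, q j}" by auto
    have ij: "i \<noteq> j" using i(3) by auto
    have iq: "i \<noteq> q i" using qgt[OF i(1)] by simp
    from i(2) iq have "(v = i \<and> w = q i) \<or> (v = q i \<and> w = i)" by (auto simp: doubleton_eq_iff)
    thus ?case
    proof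
      assume a: "v = i \<and> w = q i"
      from vD obtain n where n: "(q ^^ n) v = j" unfolding D_def by auto
      have "n \<noteq> 0" proof assume "n = 0" with n a ij show False by simp qed
      then obtain m where "n = Suc m" by (cases n) auto
      with n have "(q ^^ m) (q v) = j" by (simp add: funpow_Suc_right del: funpow.simps)
      with a show ?case unfolding D_def by auto
    next
      assume a: "v = q i \<and> w = i"
      from vD obtain n where n: "(q ^^ n) v = j" unfolding D_def by auto
      hence "(q ^^ Suc n) i = j" using a by (simp add: funpow_Suc_right del: funpow.simps)
      with a show ?case unfolding D_def by blast
    qed
  qed
  assume r: "reach_in (E - {{j, q j}}) V j (q j)"
  have "j \<in> D" unfolding D_def mem_Collect_eq by (rule exI[of _ 0]) simp
  with inv[OF r] have "q j \<in> D" by blast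
  then obtain n where n: "(q ^^ n) (q j) = j" unfolding D_def by auto
  have "q j \<le> (q ^^ n) (q j)" using funpow_ge[of q] qge by blast
  with n qgt[OF jK] show False by simp
qed

lemma mv_len: "length (mv_component Q \<sigma>) = length Q"
  by (simp add: mv_component_def)

lemma atoms_mv_Inl: "atoms_of (mv_component Q \<sigma>) (Inl X) = {i. i < length Q \<and> X \<in> Q ! \<sigma> i}"
  by (auto simp: atoms_of_def mv_component_def)

lemma atoms_mv_Inr: "atoms_of (mv_component Q \<sigma>) (Inr j) = {i. i < length Q \<and> j \<le> i}"
  by (auto simp: atoms_of_def mv_component_def)


lemma forward:
  assumes H: "hierarchical Q" and sig: "\<sigma> permutes {..<length Q}"
  shows "alpha_acyclic (mv_component Q \<sigma>)"
proof -
  define k where "k = length Q"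
  define A where "A = (\<lambda>l. Q ! (\<sigma> l))"
  define T where "T = (\<lambda>X. {l. l < k \<and> X \<in> A l})"
  have Teq: "T X = {l. l < k \<and> \<sigma> l \<in> atoms_of Q X}" for X
    using permutes_in_image[OF sig] unfolding T_def A_def atoms_of_def k_def by auto
  have Tchain: "T X \<subseteq> T Y \<or> T Y \<subseteq> T X \<or> T X \<inter> T Y = {}" for X Y
  proof -
    have "atoms_of Q X \<subseteq> atoms_of Q Y \<or> atoms_of Q Y \<subseteq> atoms_of Q X \<or> atoms_of Q X \<inter> atoms_of Q Y = {}"
      using H unfolding hierarchical_def by blast
    thus ?thesis unfolding Teq by blast
  qed
  have ex: "\<exists>l. i < l \<and> l < k \<and> (\<forall>X\<in>A i. (\<exists>l'. i < l' \<and> l' < k \<and> X \<in> A l') \<longrightarrow> X \<in> A l)"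
    if that: "i < k - 1" for i
  proof -
    define W where "W = {X\<in>A i. \<exists>l'. i < l' \<and> l' < k \<and> X \<in> A l'}"
    show ?thesis
    proof (cases "W = {}")
      case True thus ?thesis using that by (intro exI[of _ "Suc i"]) (auto simp: W_def)
    next
      case False
      then obtain X1 where "X1 \<in> W" by auto
      then obtain X0 where X0: "X0 \<in> W" and min: "\<forall>Y. Y \<in> W \<longrightarrow> card (T X0) \<le> card (T Y)"
        using ex_has_least_nat[of "\<lambda>X. X \<in> W" X1 "\<lambda>X. card (T X)"] by blast
      from X0 obtain l where l: "i < l" "l < k" "X0 \<in> A l" unfolding W_def by auto
      have all: "\<forall>Y\<in>W. T X0 \<subseteq> T Y"
      proof
        fix Y assume Y: "Y \<in> W"
        have "i \<in> T X0 \<inter> T Y" using X0 Y that unfolding W_def T_def by auto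
        hence "T X0 \<subseteq> T Y \<or> T Y \<subseteq> T X0" using Tchain[of X0 Y] by blast
        thus "T X0 \<subseteq> T Y"
        proof
          assume s: "T Y \<subseteq> T X0"
          have fin: "finite (T X0)" unfolding T_def by (rule finite_subset[of _ "{..<k}"]) auto
          have "card (T X0) \<le> card (T Y)" using min Y by blast
          hence "card (T Y) = card (T X0)" using card_mono[OF fin s] by linarith
          hence "T Y = T X0" using card_subset_eq[OF fin s] by blast
          thus ?thesis by simp
        qed simp
      qed
      have "l \<in> T X0" using l unfolding T_def by auto
      have "\<forall>Y\<in>W. Y \<in> A l"
      proof
        fix Y assume "Y \<in> W"
        hence "l \<in> T Y" using all \<open>l \<in> T X0\<close> by blast
        thus "Y \<in> A l" unfolding T_def by simp
      qed
      thus ?thesis using l unfolding W_def by blast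
    qed
  qed
  have "\<forall>i. \<exists>l. (i < k - 1 \<longrightarrow> i < l \<and> l < k \<and> (\<forall>X\<in>A i. (\<exists>l'. i < l' \<and> l' < k \<and> X \<in> A l') \<longrightarrow> X \<in> A l))
     \<and> (\<not> i < k - 1 \<longrightarrow> l = i)"
  proof
    fix i show "\<exists>l. (i < k - 1 \<longrightarrow> i < l \<and> l < k \<and> (\<forall>X\<in>A i. (\<exists>l'. i < l' \<and> l' < k \<and> X \<in> A l') \<longrightarrow> X \<in> A l))
     \<and> (\<not> i < k - 1 \<longrightarrow> l = i)"
      by (cases "i < k - 1") (use ex in auto)
  qed
  from choice[OF this] obtain q where q: "\<forall>i. (i < k - 1 \<longrightarrow> i < q i \<and> q i < k \<and> (\<forall>X\<in>A i. (\<exists>l'. i < l' \<and> l' < k \<and> X \<in> A l') \<longrightarrow> X \<in> A (q i)))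
     \<and> (\<not> i < k - 1 \<longrightarrow> q i = i)" by blast
  have qge: "x \<le> q x" for x using q by (metis less_imp_le order_refl)
  have qgt: "i < k - 1 \<Longrightarrow> i < q i \<and> q i < k" for i using q by blast
  have qX: "i < k - 1 \<Longrightarrow> X \<in> A i \<Longrightarrow> i < l' \<Longrightarrow> l' < k \<Longrightarrow> X \<in> A l' \<Longrightarrow> X \<in> A (q i)" for i X l'
    using q by blast
  define E where "E = {{i, q i} | i. i < k - 1}"
  define C where "C = mv_component Q \<sigma>"
  have lenC: "length C = k" unfolding C_def k_def by (rule mv_len)
  have Edge: "i < k - 1 \<Longrightarrow> {i, q i} \<in> E" for i unfolding E_def by blast
  have tree: "is_tree {..<k} E"
    unfolding is_tree_def
  proof (intro conjI allI impI)
    show "E \<subseteq> {{u, v} |u v. u \<in> {..<k} \<and> v \<in> {..<k} \<and> u \<noteq> v}"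
    proof
      fix e assume "e \<in> E"
      then obtain i where i: "i < k - 1" "e = {i, q i}" unfolding E_def by blast
      with qgt[OF i(1)] show "e \<in> {{u, v} |u v. u \<in> {..<k} \<and> v \<in> {..<k} \<and> u \<noteq> v}"
        by (intro CollectI exI[of _ i] exI[of _ "q i"]) auto
    qed
    show "connected_in E {..<k}"
    proof (rule conn_lemma[where q=q])
      fix i assume iP: "i \<in> {..<k}" and im: "i < Max {..<k}"
      have "Max {..<k} \<in> {..<k}" using iP by (intro Max_in) auto
      hence "i < k - 1" using im by auto
      thus "q i \<in> {..<k} \<and> i < q i \<and> {i, q i} \<in> E" using qgt Edge by auto
    qed simp
    fix u v assume uv: "{u, v} \<in> E"
    then obtain j where j: "j < k - 1" "{u, v} = {j, q j}" unfolding E_def by blast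
    have nb: "\<not> reach_in (E - {{j, q j}}) {..<k} j (q j)"
      by (rule bridge[where K="k-1"]) (use qge qgt j E_def in auto)
    from j(2) have "(u = j \<and> v = q j) \<or> (u = q j \<and> v = j)" by (auto simp: doubleton_eq_iff)
    thus "\<not> reach_in (E - {{u, v}}) {..<k} u v"
    proof
      assume "u = j \<and> v = q j" thus ?thesis using nb by simp
    next
      assume a: "u = q j \<and> v = j"
      show ?thesis
      proof
        assume "reach_in (E - {{u, v}}) {..<k} u v"
        hence "reach_in (E - {{j, q j}}) {..<k} j (q j)" using a reach_in_sym by (metis insert_commute)
        thus False using nb by simp
      qed
    qed
  qed
  have conn: "connected_in E (atoms_of C x)" for x
  proof (cases x)
    case (Inl X)
    have at: "atoms_of C x = T X" unfolding Inl C_def atoms_mv_Inl T_def A_def k_def by simp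
    show ?thesis unfolding at
    proof (rule conn_lemma[where q=q])
      show fin: "finite (T X)" unfolding T_def by (rule finite_subset[of _ "{..<k}"]) auto
      fix i assume iP: "i \<in> T X" and im: "i < Max (T X)"
      have MT: "Max (T X) \<in> T X" using iP fin by (intro Max_in) auto
      hence Mk: "Max (T X) < k" "X \<in> A (Max (T X))" unfolding T_def by auto
      have ik: "i < k - 1" using im Mk by auto
      have XA: "X \<in> A i" using iP unfolding T_def by auto
      have "X \<in> A (q i)" by (rule qX[OF ik XA im Mk(1) Mk(2)])
      thus "q i \<in> T X \<and> i < q i \<and> {i, q i} \<in> E" using qgt[OF ik] Edge[OF ik] unfolding T_def by auto
    qed
  next
    case (Inr j)
    have at: "atoms_of C x = {i. i < k \<and> j \<le> i}" unfolding Inr C_def atoms_mv_Inr k_def by simp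
    show ?thesis unfolding at
    proof (rule conn_lemma[where q=q])
      show fin: "finite {i. i < k \<and> j \<le> i}" by (rule finite_subset[of _ "{..<k}"]) auto
      fix i assume iP: "i \<in> {i. i < k \<and> j \<le> i}" and im: "i < Max {i. i < k \<and> j \<le> i}"
      have MT: "Max {i. i < k \<and> j \<le> i} \<in> {i. i < k \<and> j \<le> i}" using iP fin by (intro Max_in) auto
      have ik: "i < k - 1" using im MT by auto
      thus "q i \<in> {i. i < k \<and> j \<le> i} \<and> i < q i \<and> {i, q i} \<in> E" using qgt[OF ik] Edge[OF ik] iP by auto
    qed
  qed
  have "join_tree C E" unfolding join_tree_def lenC using tree conn by blast
  thus ?thesis unfolding alpha_acyclic_def C_def by blast
qed


lemma backward:
  assumes Acy: "mv_extension_acyclic Q" shows "hierarchical Q"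
proof (rule ccontr)
  assume "\<not> hierarchical Q"
  then obtain X Y where nh: "\<not> (atoms_of Q X \<subseteq> atoms_of Q Y \<or> atoms_of Q Y \<subseteq> atoms_of Q X \<or> atoms_of Q X \<inter> atoms_of Q Y = {})"
    unfolding hierarchical_def by blast
  then obtain a b c where a: "a \<in> atoms_of Q X" "a \<notin> atoms_of Q Y" and b: "b \<in> atoms_of Q Y" "b \<notin> atoms_of Q X"
     and c: "c \<in> atoms_of Q X" "c \<in> atoms_of Q Y" by blast
  define k where "k = length Q"
  have abc: "a < k" "b < k" "c < k" "a \<noteq> b" "a \<noteq> c" "b \<noteq> c" using a b c by (auto simp: atoms_of_def k_def)
  have XQ: "X \<in> Q ! a" "X \<notin> Q ! b" "X \<in> Q ! c" "Y \<notin> Q ! a" "Y \<in> Q ! b" "Y \<in> Q ! c"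
    using a b c abc by (auto simp: atoms_of_def k_def)
  define F where "F = filter (\<lambda>x. x \<notin> {a,b,c}) [0..<k]"
  define L where "L = F @ [c,a,b]"
  define n where "n = length F"
  have dL: "distinct L" using abc unfolding L_def F_def by auto
  have sL: "set L = {..<k}" using abc unfolding L_def F_def by auto
  have lL: "length L = k" using distinct_card[OF dL] sL by simp
  hence kn: "k = Suc (Suc (Suc n))" unfolding L_def n_def by simp
  have Ln: "L ! n = c" "L ! Suc n = a" "L ! Suc (Suc n) = b" unfolding L_def n_def by (auto simp: nth_append)
  define \<sigma> where "\<sigma> = (\<lambda>i. if i < k then L ! i else i)"
  have bij: "bij_betw ((!) L) {..<k} {..<k}" using bij_betw_nth[OF dL] lL sL by simp
  have "bij_betw \<sigma> {..<k} {..<k}" using bij unfolding \<sigma>_def by (rule bij_betw_cong[THEN iffD1, rotated]) auto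
  hence perm: "\<sigma> permutes {..<length Q}" unfolding k_def by (rule bij_imp_permutes) (simp add: \<sigma>_def k_def)
  have sig: "\<sigma> n = c" "\<sigma> (Suc n) = a" "\<sigma> (Suc (Suc n)) = b" using Ln kn unfolding \<sigma>_def by auto
  define C where "C = mv_component Q \<sigma>"
  have "alpha_acyclic C" using Acy perm unfolding mv_extension_acyclic_def C_def by blast
  then obtain E where jt: "join_tree C E" unfolding alpha_acyclic_def by blast
  have lenC: "length C = k" unfolding C_def k_def by (rule mv_len)
  have tree: "is_tree {..<k} E" and cn: "\<And>v. connected_in E (atoms_of C v)"
    using jt unfolding join_tree_def lenC by auto
  have br: "\<And>u v. {u,v} \<in> E \<Longrightarrow> \<not> reach_in (E - {{u,v}}) {..<k} u v"
    using tree unfolding is_tree_def by blast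
  have at1: "atoms_of C (Inr (Suc n)) = {Suc n, Suc (Suc n)}"
    unfolding C_def atoms_mv_Inr k_def[symmetric] kn by auto
  have at0: "atoms_of C (Inr n) = {n, Suc n, Suc (Suc n)}"
    unfolding C_def atoms_mv_Inr k_def[symmetric] kn by auto
  have PX: "atoms_of C (Inl X) \<subseteq> {..<k}" "n \<in> atoms_of C (Inl X)" "Suc n \<in> atoms_of C (Inl X)"
     "Suc (Suc n) \<notin> atoms_of C (Inl X)"
    unfolding C_def atoms_mv_Inl k_def[symmetric] using kn sig XQ by auto
  have PY: "atoms_of C (Inl Y) \<subseteq> {..<k}" "n \<in> atoms_of C (Inl Y)" "Suc n \<notin> atoms_of C (Inl Y)"
     "Suc (Suc n) \<in> atoms_of C (Inl Y)"
    unfolding C_def atoms_mv_Inl k_def[symmetric] using kn sig XQ by auto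
  have "reach_in E {Suc n, Suc (Suc n)} (Suc n) (Suc (Suc n))"
    using cn[of "Inr (Suc n)"] unfolding at1 connected_in_def by blast
  from reach_in_first[OF this] have e1: "{Suc n, Suc (Suc n)} \<in> E" by auto
  have "reach_in E {n, Suc n, Suc (Suc n)} n (Suc (Suc n))"
    using cn[of "Inr n"] unfolding at0 connected_in_def by blast
  from reach_in_first[OF this] have "{n, Suc n} \<in> E \<or> {n, Suc (Suc n)} \<in> E" by auto
  thus False
  proof
    assume e: "{n, Suc n} \<in> E"
    have "reach_in E (atoms_of C (Inl Y)) n (Suc (Suc n))"
      using cn[of "Inl Y"] PY unfolding connected_in_def by blast
    hence "reach_in (E - {{n, Suc n}}) {..<k} n (Suc (Suc n))"
      by (rule reach_in_lift) (use PY in auto)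
    moreover have "{Suc (Suc n), Suc n} \<in> E - {{n, Suc n}}" using e1 by (auto simp: insert_commute doubleton_eq_iff)
    ultimately have "reach_in (E - {{n, Suc n}}) {..<k} n (Suc n)"
      by (rule reach_in.step) (simp add: kn)
    thus False using br[OF e] by blast
  next
    assume e: "{n, Suc (Suc n)} \<in> E"
    have "reach_in E (atoms_of C (Inl X)) n (Suc n)"
      using cn[of "Inl X"] PX unfolding connected_in_def by blast
    hence "reach_in (E - {{n, Suc (Suc n)}}) {..<k} n (Suc n)"
      by (rule reach_in_lift) (use PX in auto)
    moreover have "{Suc n, Suc (Suc n)} \<in> E - {{n, Suc (Suc n)}}" using e1 by (auto simp: doubleton_eq_iff)
    ultimately have "reach_in (E - {{n, Suc (Suc n)}}) {..<k} n (Suc (Suc n))"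
      by (rule reach_in.step) (simp add: kn)
    thus False using br[OF e] by blast
  qed
qed

theorem mainTheorem7:
  fixes Q :: "'v query"
  shows "hierarchical Q \<longleftrightarrow> mv_extension_acyclic Q"
  using forward backward unfolding mv_extension_acyclic_def by blast

end
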